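(* Fix $K\ge 2$, a prior concentration vector $\alpha\in\mathbb{R}_{+}^{K}$ (all entries positive), a temperature $\nu>0$, and observed data $(Y_1,X_1),\dots,(Y_n,X_n)$ with $Y_i\in\{1,\dots,K\}$ and $X_i\in\mathbb{R}^d$. Let $\{\mathrm{NN}^{\phi}:\mathbb{R}^d\to\mathbb{R}_{+}^{K}\}_{\phi\in\Phi}$ be a family of neural networks and, for $\phi\in\Phi$, let $q^{\phi}_{X_{1:n}}=\prod_{i=1}^n q^{\phi}_{X_i}$ with $q^{\phi}_{X_i}=\mathrm{Dir}(\alpha+\mathrm{NN}^{\phi}(X_i))$ be the mean-field variational distribution on $(\Delta^{K-1})^n$. Let $\pi^{\nu}_{Y_{1:n}}$ be the tempered pseudo-posterior of the tempered independent categorical–Dirichlet model (defined in the context). Then for $\phi\in\Phi$, $$\widehat{\phi}\in\arg\min_{\phi\in\Phi}\mathrm{KL}\big(q^{\phi}_{X_{1:n}}\,\|\,\pi^{\nu}_{Y_{1:n}}\big)\quad\Longleftrightarrow\quad \widehat{\phi}\in\arg\min_{\phi\in\Phi}\mathcal{L}^{1/\nu}_{\mathrm{EDL}}(\phi;Y_{1:n},X_{1:n}),$$ i.e. amortized variational inference for the tempered model is equivalent to training an EDL model with regularization parameter $\lambda=1/\nu$.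
   Context: $\Delta^{K-1}$ is the probability simplex in $\mathbb{R}^K$; $\mathrm{Cat}(p)$ is the categorical distribution with $\mathbb{P}(Y=k)=p(k)$, and $f_p(y)=\prod_{k=1}^K p(k)^{\mathbb{I}(y=k)}=p(y)$ its probability mass function; $\mathrm{Dir}(\beta)$ is the Dirichlet distribution on $\Delta^{K-1}$ with concentration $\beta\in\mathbb{R}_+^K$; $\pi=\mathrm{Dir}(\alpha)$. Tempered independent categorical–Dirichlet model: the class-probability vectors $p_1,\dots,p_n$ are i.i.d. with prior $\pi$, and the (unnormalized) pseudo-likelihood of $Y_i$ given $p_i$ is $f_{p_i}(Y_i)^{\nu}$; the tempered pseudo-posterior $\pi^{\nu}_{Y_{1:n}}$ is the probability density on $(\Delta^{K-1})^n$ proportional to $\prod_{i=1}^n f_{p_i}(Y_i)^{\nu}\,\pi(p_i)$. The EDL loss with regularization parameter $\lambda>0$ is $$\mathcal{L}^{\lambda}_{\mathrm{EDL}}(\phi;Y_{1:n},X_{1:n})=\sum_{i=1}^n -\mathbb{E}_{p_i\sim\mathrm{Dir}(\alpha+\mathrm{NN}^{\phi}(X_i))}\big[\log \mathrm{Cat}(Y_i\mid p_i)\big]+\lambda\sum_{i=1}^n\mathrm{KL}\big(\mathrm{Dir}(\alpha+\mathrm{NN}^{\phi}(X_i))\,\|\,\mathrm{Dir}(\alpha)\big).$$ *)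

theory Defs
  imports "HOL-Probability.Probability"
begin

text \<open>Classes are indexed 0,...,K-1; a point of the simplex is a function nat => real
  (extensional outside {..<K}).\<close>

text \<open>Reference measure on the simplex: Lebesgue measure on the first K-1 coordinates
  (restricted to the corner region), pushed forward to the full K-vector.\<close>
definition simplex_coords :: "nat \<Rightarrow> (nat \<Rightarrow> real) \<Rightarrow> (nat \<Rightarrow> real)" where
  "simplex_coords K x = (\<lambda>j. if j < K - 1 then x j
                              else if j = K - 1 then 1 - (\<Sum>i<K - 1. x i) else undefined)"

definition simplex_measure :: "nat \<Rightarrow> (nat \<Rightarrow> real) measure" where
  "simplex_measure K =
     distr (restrict_space (PiM {..<K - 1} (\<lambda>_. lborel))
              {x. (\<forall>i<K - 1. 0 \<le> x i) \<and> (\<Sum>i<K - 1. x i) \<le> 1})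
           (PiM {..<K} (\<lambda>_. borel)) (simplex_coords K)"

definition dir_density :: "nat \<Rightarrow> (nat \<Rightarrow> real) \<Rightarrow> (nat \<Rightarrow> real) \<Rightarrow> real" where
  "dir_density K \<beta> p =
     Gamma (\<Sum>k<K. \<beta> k) / (\<Prod>k<K. Gamma (\<beta> k)) * (\<Prod>k<K. p k powr (\<beta> k - 1))"

definition Dirichlet :: "nat \<Rightarrow> (nat \<Rightarrow> real) \<Rightarrow> (nat \<Rightarrow> real) measure" where
  "Dirichlet K \<beta> = density (simplex_measure K) (\<lambda>p. ennreal (dir_density K \<beta> p))"

definition cat_pmf :: "nat \<Rightarrow> (nat \<Rightarrow> real) \<Rightarrow> nat \<Rightarrow> real" where
  "cat_pmf K p y = (\<Prod>k<K. p k ^ (if y = k then 1 else 0))"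

text \<open>KL(Q || P) = integral of ln (dQ/dP) dQ (library KL_divergence with base e; note the
  library argument order KL_divergence b P Q = KL(Q || P)).\<close>
definition KL :: "'a measure \<Rightarrow> 'a measure \<Rightarrow> real" where
  "KL Q P = KL_divergence (exp 1) P Q"

definition tempered_posterior ::
  "nat \<Rightarrow> (nat \<Rightarrow> real) \<Rightarrow> real \<Rightarrow> nat \<Rightarrow> (nat \<Rightarrow> nat) \<Rightarrow> (nat \<Rightarrow> nat \<Rightarrow> real) measure" where
  "tempered_posterior K \<alpha> \<nu> n Y =
     (let base = PiM {..<n} (\<lambda>_. simplex_measure K);
          u = (\<lambda>P. ennreal (\<Prod>i<n. cat_pmf K (P i) (Y i) powr \<nu> * dir_density K \<alpha> (P i)))
      in density base (\<lambda>P. u P / (\<integral>\<^sup>+ P'. u P' \<partial>base)))"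

definition mean_field ::
  "nat \<Rightarrow> (nat \<Rightarrow> real) \<Rightarrow> ('phi \<Rightarrow> 'x \<Rightarrow> nat \<Rightarrow> real) \<Rightarrow> nat \<Rightarrow> (nat \<Rightarrow> 'x) \<Rightarrow> 'phi
     \<Rightarrow> (nat \<Rightarrow> nat \<Rightarrow> real) measure" where
  "mean_field K \<alpha> NN n X \<phi> = PiM {..<n} (\<lambda>i. Dirichlet K (\<lambda>k. \<alpha> k + NN \<phi> (X i) k))"

definition edl_loss ::
  "nat \<Rightarrow> (nat \<Rightarrow> real) \<Rightarrow> ('phi \<Rightarrow> 'x \<Rightarrow> nat \<Rightarrow> real) \<Rightarrow> real \<Rightarrow> nat \<Rightarrow> (nat \<Rightarrow> nat)
     \<Rightarrow> (nat \<Rightarrow> 'x) \<Rightarrow> 'phi \<Rightarrow> real" where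
  "edl_loss K \<alpha> NN lam n Y X \<phi> =
     (\<Sum>i<n. - (\<integral>p. ln (cat_pmf K p (Y i)) \<partial>Dirichlet K (\<lambda>k. \<alpha> k + NN \<phi> (X i) k)))
     + lam * (\<Sum>i<n. KL (Dirichlet K (\<lambda>k. \<alpha> k + NN \<phi> (X i) k)) (Dirichlet K \<alpha>))"

end

theory Submission
  imports Defs
begin


lemma beta_nn:
  fixes a b :: real assumes a: "a > 0" and b: "b > 0"
  shows "(\<integral>\<^sup>+u. ennreal (u powr (a - 1) * (1 - u) powr (b - 1)) * indicator {0..1} u \<partial>lborel) = ennreal (Beta a b)"
  by (rule nn_integral_has_integral_lebesgue'[OF _ has_integral_Beta_real[OF a b]]) auto

lemma beta_scaled:
  fixes a b t :: real assumes a: "a > 0" and b: "b > 0"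
  shows "(\<integral>\<^sup>+y. ennreal (y powr (a - 1) * (t - y) powr (b - 1)) * indicator {0..t} y \<partial>lborel)
        = ennreal (t powr (a + b - 1) * Beta a b) * indicator {0..} t"
proof (cases "t > 0")
  case True
  have "(\<integral>\<^sup>+y. ennreal (y powr (a - 1) * (t - y) powr (b - 1)) * indicator {0..t} y \<partial>lborel)
     = ennreal \<bar>t\<bar> * (\<integral>\<^sup>+u. ennreal ((0 + t * u) powr (a - 1) * (t - (0 + t * u)) powr (b - 1)) * indicator {0..t} (0 + t * u) \<partial>lborel)"
    by (rule nn_integral_real_affine) (use True in auto)
  also have "\<dots> = ennreal t * (\<integral>\<^sup>+u. ennreal (t powr (a + b - 2)) * (ennreal (u powr (a - 1) * (1 - u) powr (b - 1)) * indicator {0..1} u) \<partial>lborel)"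
  proof -
    have "ennreal ((0 + t * u) powr (a - 1) * (t - (0 + t * u)) powr (b - 1)) * indicator {0..t} (0 + t * u)
      = ennreal (t powr (a + b - 2)) * (ennreal (u powr (a - 1) * (1 - u) powr (b - 1)) * indicator {0..1} u)" for u
    proof (cases "u \<in> {0..1}")
      case True
      then have "t * u \<in> {0..t}" using \<open>t > 0\<close> by (auto simp: mult_le_cancel_left1)
      moreover have "(t * u) powr (a - 1) * (t - t * u) powr (b - 1) = t powr (a + b - 2) * (u powr (a - 1) * (1 - u) powr (b - 1))"
      proof -
        have "t - t * u = t * (1 - u)" by (simp add: algebra_simps)
        then show ?thesis
          by (simp add: powr_mult powr_add[symmetric] mult_ac)
      qed
      ultimately show ?thesis using True by (simp add: ennreal_mult'' indicator_def ennreal_mult)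
    next
      case False
      then have "t * u \<notin> {0..t}" using \<open>t > 0\<close>
        by (auto simp: zero_le_mult_iff mult_le_cancel_left1)
      then show ?thesis using False by simp
    qed
    then show ?thesis using True by simp
  qed
  also have "\<dots> = ennreal t * (ennreal (t powr (a + b - 2)) * ennreal (Beta a b))"
    by (subst nn_integral_cmult) (auto simp: beta_nn[OF a b])
  also have "\<dots> = ennreal (t powr (a + b - 1) * Beta a b)"
  proof -
    have "t * t powr (a + b - 2) = t powr (a + b - 1)"
      using True by (simp add: powr_add[symmetric] powr_mult_base)
    moreover have "0 \<le> Beta a b" using a b by (simp add: Beta_def Gamma_real_pos less_imp_le)
    ultimately show ?thesis using True
      by (simp add: ennreal_mult[symmetric] mult.assoc[symmetric])
  qed
  finally show ?thesis using True by simp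
next
  case False
  have e: "(\<lambda>y. ennreal (y powr (a - 1) * (t - y) powr (b - 1)) * indicator {0..t} y) = (\<lambda>_. 0)"
  proof (rule ext)
    fix y show "ennreal (y powr (a - 1) * (t - y) powr (b - 1)) * indicator {0..t} y = 0"
      using False by (cases "y \<in> {0..t}") auto
  qed
  show ?thesis unfolding e using False by (auto simp: indicator_def)
qed

lemma psf_lborel: "product_sigma_finite (\<lambda>_::nat. lborel :: real measure)"
  by (simp add: product_sigma_finite_def sigma_finite_lborel)

lemma meas_DI: "(\<lambda>x::nat\<Rightarrow>real. ennreal ((\<Prod>k<m. x k powr (a k - 1)) * (1 - (\<Sum>k<m. x k)) powr (b - 1))
            * indicator {x. (\<forall>i<m. 0 \<le> x i) \<and> (\<Sum>i<m. x i) \<le> 1} x) \<in> borel_measurable (PiM {..<m} (\<lambda>_. lborel))"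
  apply (intro borel_measurable_times_ennreal)
  apply measurable
  done

lemma DI:
  fixes a :: "nat \<Rightarrow> real" and b :: real
  assumes a: "\<forall>k<m. a k > 0" and b: "b > 0"
  shows "(\<integral>\<^sup>+x. ennreal ((\<Prod>k<m. x k powr (a k - 1)) * (1 - (\<Sum>k<m. x k)) powr (b - 1))
            * indicator {x. (\<forall>i<m. 0 \<le> x i) \<and> (\<Sum>i<m. x i) \<le> 1} x \<partial>PiM {..<m} (\<lambda>_. lborel))
   = ennreal ((\<Prod>k<m. Gamma (a k)) * Gamma b / Gamma ((\<Sum>k<m. a k) + b))"
  using a b
proof (induction m arbitrary: b)
  case 0
  interpret product_sigma_finite "\<lambda>_::nat. lborel :: real measure" by (rule psf_lborel)
  have "Gamma b > 0" using 0 by simp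
  then show ?case by (simp add: PiM_empty)
next
  case (Suc m)
  interpret product_sigma_finite "\<lambda>_::nat. lborel :: real measure" by (rule psf_lborel)
  have am: "a m > 0" using Suc.prems by auto
  have a': "\<forall>k<m. a k > 0" using Suc.prems by auto
  define P where "P x = (\<Prod>k<m. x k powr (a k - 1))" for x :: "nat \<Rightarrow> real"
  define C where "C = {x::nat\<Rightarrow>real. (\<forall>i<m. 0 \<le> x i) \<and> (\<Sum>i<m. x i) \<le> 1}"
  let ?f = "\<lambda>x. ennreal ((\<Prod>k<Suc m. x k powr (a k - 1)) * (1 - (\<Sum>k<Suc m. x k)) powr (b - 1))
            * indicator {x. (\<forall>i<Suc m. 0 \<le> x i) \<and> (\<Sum>i<Suc m. x i) \<le> 1} x"
  have "(\<integral>\<^sup>+x. ?f x \<partial>PiM {..<Suc m} (\<lambda>_. lborel))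
      = (\<integral>\<^sup>+x. (\<integral>\<^sup>+y. ?f (x(m := y)) \<partial>lborel) \<partial>PiM {..<m} (\<lambda>_. lborel))"
    unfolding lessThan_Suc by (rule product_nn_integral_insert) (simp, simp, rule meas_DI[where m="Suc m", unfolded lessThan_Suc])
  also have "\<dots> = (\<integral>\<^sup>+x. ennreal (Beta (a m) b) * (ennreal (P x * (1 - (\<Sum>k<m. x k)) powr ((a m + b) - 1)) * indicator C x) \<partial>PiM {..<m} (\<lambda>_. lborel))"
  proof (rule nn_integral_cong)
    fix x :: "nat \<Rightarrow> real"
    define t where "t = 1 - (\<Sum>k<m. x k)"
    have sx: "(\<Sum>k<m. (x(m := y)) k) = (\<Sum>k<m. x k)" for y by (rule sum.cong) auto
    have px: "(\<Prod>k<m. (x(m := y)) k powr (a k - 1)) = P x" for y unfolding P_def by (rule prod.cong) auto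
    have "?f (x(m := y)) = ennreal (P x) * indicator {x. \<forall>i<m. 0 \<le> x i} x * (ennreal (y powr (a m - 1) * (t - y) powr (b - 1)) * indicator {0..t} y)" for y
    proof -
      have ind: "indicator {x. (\<forall>i<Suc m. 0 \<le> x i) \<and> (\<Sum>i<Suc m. x i) \<le> 1} (x(m := y))
          = (indicator {x. \<forall>i<m. 0 \<le> x i} x * indicator {0..t} y :: ennreal)"
        by (auto simp: indicator_def sx t_def less_Suc_eq)
      have pr: "(\<Prod>k<Suc m. (x(m := y)) k powr (a k - 1)) = P x * y powr (a m - 1)"
        using px[of y] by simp
      have sm: "1 - (\<Sum>k<Suc m. (x(m := y)) k) = t - y"
        using sx[of y] by (simp add: t_def)
      have P0: "0 \<le> P x" unfolding P_def by (simp add: prod_nonneg)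
      show ?thesis
        unfolding ind pr sm using P0
        by (simp add: ennreal_mult mult.assoc mult.left_commute)
    qed
    then have "(\<integral>\<^sup>+y. ?f (x(m := y)) \<partial>lborel) = ennreal (P x) * indicator {x. \<forall>i<m. 0 \<le> x i} x * 
        (\<integral>\<^sup>+y. ennreal (y powr (a m - 1) * (t - y) powr (b - 1)) * indicator {0..t} y \<partial>lborel)"
      by (simp add: nn_integral_cmult)
    also have "\<dots> = ennreal (P x) * indicator {x. \<forall>i<m. 0 \<le> x i} x * (ennreal (t powr (a m + b - 1) * Beta (a m) b) * indicator {0..} t)"
      by (simp add: beta_scaled[OF am Suc.prems(2)])
    also have "\<dots> = ennreal (Beta (a m) b) * (ennreal (P x * (1 - (\<Sum>k<m. x k)) powr ((a m + b) - 1)) * indicator C x)"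
    proof -
      have "0 \<le> Beta (a m) b" using am Suc.prems(2) by (simp add: Beta_def Gamma_real_pos less_imp_le)
      moreover have "0 \<le> P x" unfolding P_def by (simp add: prod_nonneg)
      moreover have "indicator C x = (indicator {x. \<forall>i<m. 0 \<le> x i} x * indicator {0..} t :: ennreal)"
        by (auto simp: indicator_def C_def t_def)
      ultimately show ?thesis
        by (simp add: ennreal_mult t_def mult.assoc mult.left_commute)
    qed
    finally show "(\<integral>\<^sup>+y. ?f (x(m := y)) \<partial>lborel) = ennreal (Beta (a m) b) * (ennreal (P x * (1 - (\<Sum>k<m. x k)) powr ((a m + b) - 1)) * indicator C x)" .
  qed
  also have "\<dots> = ennreal (Beta (a m) b) * ennreal ((\<Prod>k<m. Gamma (a k)) * Gamma (a m + b) / Gamma ((\<Sum>k<m. a k) + (a m + b)))"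
    using Suc.IH[OF a', of "a m + b"] am Suc.prems(2) unfolding P_def C_def
    by (subst nn_integral_cmult) auto
  also have "\<dots> = ennreal ((\<Prod>k<Suc m. Gamma (a k)) * Gamma b / Gamma ((\<Sum>k<Suc m. a k) + b))"
  proof -
    have g1: "Gamma (a m + b) > 0" using am Suc.prems(2) by (simp add: Gamma_real_pos)
    have B0: "0 \<le> Beta (a m) b" using am Suc.prems(2) by (simp add: Beta_def Gamma_real_pos less_imp_le)
    have eq: "Beta (a m) b * ((\<Prod>k<m. Gamma (a k)) * Gamma (a m + b) / Gamma ((\<Sum>k<m. a k) + (a m + b)))
        = (\<Prod>k<Suc m. Gamma (a k)) * Gamma b / Gamma ((\<Sum>k<Suc m. a k) + b)"
    proof -
      have "(\<Sum>k<Suc m. a k) + b = (\<Sum>k<m. a k) + (a m + b)" by simp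
      then show ?thesis using g1 by (simp add: Beta_def add.assoc mult_ac)
    qed
    show ?thesis unfolding eq[symmetric] using B0 by (rule ennreal_mult'[symmetric])
  qed
  finally show ?case .
qed



definition Cset :: "nat \<Rightarrow> (nat \<Rightarrow> real) set" where
  "Cset m = {x. (\<forall>i<m. 0 \<le> x i) \<and> (\<Sum>i<m. x i) \<le> 1}"

lemma Cset_sets: "Cset m \<inter> space (PiM {..<m} (\<lambda>_. lborel)) \<in> sets (PiM {..<m} (\<lambda>_. lborel))"
  unfolding Cset_def by measurable

lemma sets_S: "sets (simplex_measure K) = sets (PiM {..<K} (\<lambda>_. borel))"
  by (simp add: simplex_measure_def)

lemma space_S: "space (simplex_measure K) = space (PiM {..<K} (\<lambda>_. borel))"
  by (simp add: simplex_measure_def)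

lemma meas_coords:
  assumes K: "K \<ge> 1"
  shows "simplex_coords K \<in> measurable (restrict_space (PiM {..<K - 1} (\<lambda>_. lborel)) (Cset (K - 1))) (PiM {..<K} (\<lambda>_. borel))"
proof -
  have "(\<lambda>x j. if j < K - 1 then x j else if j = K - 1 then 1 - (\<Sum>i<K - 1. x i) else undefined)
     \<in> measurable (PiM {..<K - 1} (\<lambda>_. lborel)) (PiM {..<K} (\<lambda>_. borel))"
  proof (rule measurable_PiM_single')
    fix j assume "j \<in> {..<K}"
    show "(\<lambda>x. if j < K - 1 then x j else if j = K - 1 then 1 - (\<Sum>i<K - 1. x i) else undefined)
        \<in> measurable (PiM {..<K - 1} (\<lambda>_. lborel)) borel"
      using \<open>j \<in> {..<K}\<close> by (cases "j < K - 1") auto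
  next
    show "(\<lambda>x j. if j < K - 1 then x j else if j = K - 1 then 1 - (\<Sum>i<K - 1. x i) else undefined)
        \<in> space (PiM {..<K - 1} (\<lambda>_. lborel)) \<rightarrow> (\<Pi>\<^sub>E j\<in>{..<K}. space borel)"
      using K by (auto simp: PiE_def extensional_def)
  qed
  then show ?thesis
    unfolding simplex_coords_def by (rule measurable_restrict_space1)
qed

lemma nn_integral_S:
  assumes K: "K \<ge> 1" and f: "f \<in> borel_measurable (PiM {..<K} (\<lambda>_. borel))"
  shows "(\<integral>\<^sup>+p. f p \<partial>simplex_measure K)
       = (\<integral>\<^sup>+x. f (simplex_coords K x) * indicator (Cset (K - 1)) x \<partial>PiM {..<K - 1} (\<lambda>_. lborel))"
proof -
  have "(\<integral>\<^sup>+p. f p \<partial>simplex_measure K)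
      = (\<integral>\<^sup>+x. f (simplex_coords K x) \<partial>restrict_space (PiM {..<K - 1} (\<lambda>_. lborel)) (Cset (K - 1)))"
    unfolding simplex_measure_def Cset_def[symmetric]
    by (rule nn_integral_distr[OF meas_coords[OF K]]) (simp add: f measurable_distr_eq1)
  also have "\<dots> = (\<integral>\<^sup>+x. f (simplex_coords K x) * indicator (Cset (K - 1)) x \<partial>PiM {..<K - 1} (\<lambda>_. lborel))"
    by (rule nn_integral_restrict_space[OF Cset_sets])
  finally show ?thesis .
qed

lemma meas_dir [measurable]: "dir_density K \<beta> \<in> borel_measurable (PiM {..<K} (\<lambda>_. borel))"
  unfolding dir_density_def by measurable

lemma G_pos:
  fixes \<beta> :: "nat \<Rightarrow> real"
  assumes K: "K \<ge> 1" and \<beta>: "\<forall>k<K. \<beta> k > 0"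
  shows "Gamma (\<Sum>k<K. \<beta> k) / (\<Prod>k<K. Gamma (\<beta> k)) > 0"
proof -
  have "(\<Sum>k<K. \<beta> k) > 0" using K \<beta> by (intro ordered_comm_monoid_add_class.sum_pos) (auto simp: lessThan_empty_iff)
  then have "Gamma (\<Sum>k<K. \<beta> k) > 0" by simp
  moreover have "(\<Prod>k<K. Gamma (\<beta> k)) > 0" using \<beta> by (intro prod_pos) auto
  ultimately show ?thesis by simp
qed

lemma dir_nonneg: "K \<ge> 1 \<Longrightarrow> (\<forall>k<K. \<beta> k > 0) \<Longrightarrow> 0 \<le> dir_density K \<beta> p"
  unfolding dir_density_def by (rule mult_nonneg_nonneg[OF less_imp_le[OF G_pos] prod_nonneg]) auto

lemma dir_total:
  assumes K: "K \<ge> 1" and \<beta>: "\<forall>k<K. \<beta> k > 0"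
  shows "(\<integral>\<^sup>+p. ennreal (dir_density K \<beta> p) \<partial>simplex_measure K) = 1"
proof -
  obtain m where Km: "K = Suc m" using K by (cases K) auto
  define G where "G = Gamma (\<Sum>k<Suc m. \<beta> k) / (\<Prod>k<Suc m. Gamma (\<beta> k))"
  have G0: "0 \<le> G" unfolding G_def using G_pos[OF K \<beta>] by (simp add: Km)
  have "(\<integral>\<^sup>+p. ennreal (dir_density K \<beta> p) \<partial>simplex_measure K)
     = (\<integral>\<^sup>+x. ennreal (dir_density K \<beta> (simplex_coords K x)) * indicator (Cset (K - 1)) x \<partial>PiM {..<K - 1} (\<lambda>_. lborel))"
    by (rule nn_integral_S[OF K]) measurable
  also have "\<dots> = (\<integral>\<^sup>+x. ennreal G * (ennreal ((\<Prod>k<m. x k powr (\<beta> k - 1)) * (1 - (\<Sum>k<m. x k)) powr (\<beta> m - 1))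
            * indicator {x. (\<forall>i<m. 0 \<le> x i) \<and> (\<Sum>i<m. x i) \<le> 1} x) \<partial>PiM {..<m} (\<lambda>_. lborel))"
    unfolding Km diff_Suc_1
  proof (rule nn_integral_cong)
    fix x :: "nat \<Rightarrow> real"
    have pr: "(\<Prod>k<Suc m. simplex_coords (Suc m) x k powr (\<beta> k - 1)) = (\<Prod>k<m. x k powr (\<beta> k - 1)) * (1 - (\<Sum>k<m. x k)) powr (\<beta> m - 1)"
      unfolding prod.lessThan_Suc by (auto simp: simplex_coords_def intro!: prod.cong)
    show "ennreal (dir_density (Suc m) \<beta> (simplex_coords (Suc m) x)) * indicator (Cset m) x
       = ennreal G * (ennreal ((\<Prod>k<m. x k powr (\<beta> k - 1)) * (1 - (\<Sum>k<m. x k)) powr (\<beta> m - 1))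
            * indicator {x. (\<forall>i<m. 0 \<le> x i) \<and> (\<Sum>i<m. x i) \<le> 1} x)"
      unfolding dir_density_def G_def[symmetric] pr using G0
      by (simp add: Cset_def ennreal_mult' prod_nonneg mult.assoc)
  qed
  also have "\<dots> = ennreal G * ennreal ((\<Prod>k<m. Gamma (\<beta> k)) * Gamma (\<beta> m) / Gamma ((\<Sum>k<m. \<beta> k) + \<beta> m))"
    using DI[of m \<beta> "\<beta> m"] \<beta> unfolding Km by (subst nn_integral_cmult) auto
  also have "\<dots> = 1"
  proof -
    have p: "(\<Prod>k<K. Gamma (\<beta> k)) > 0" using \<beta> by (auto intro!: prod_pos Gamma_real_pos)
    have s0: "0 < (\<Sum>k<Suc m. \<beta> k)" using \<beta> Km by (intro ordered_comm_monoid_add_class.sum_pos) auto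
    have s: "Gamma (\<Sum>k<K. \<beta> k) > 0" using s0 Km by simp
    have e: "\<And>a c::real. a \<noteq> 0 \<Longrightarrow> c \<noteq> 0 \<Longrightarrow> c / a * (a / c) = 1" by simp
    have Gd: "G = Gamma ((\<Sum>k<m. \<beta> k) + \<beta> m) / ((\<Prod>k<m. Gamma (\<beta> k)) * Gamma (\<beta> m))"
      unfolding G_def by simp
    have eq1: "G * ((\<Prod>k<m. Gamma (\<beta> k)) * Gamma (\<beta> m) / Gamma ((\<Sum>k<m. \<beta> k) + \<beta> m)) = 1"
    proof -
      have pa: "(\<Prod>k<m. Gamma (\<beta> k)) * Gamma (\<beta> m) > 0" using p unfolding Km by (simp only: prod.lessThan_Suc)
      have sa: "Gamma ((\<Sum>k<m. \<beta> k) + \<beta> m) > 0" using s unfolding Km by (simp only: sum.lessThan_Suc)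
      have pa': "(\<Prod>k<m. Gamma (\<beta> k)) * Gamma (\<beta> m) \<noteq> 0" using pa by linarith
      have sa': "Gamma ((\<Sum>k<m. \<beta> k) + \<beta> m) \<noteq> 0" using sa by linarith
      show ?thesis unfolding Gd by (rule e[OF pa' sa'])
    qed
    show ?thesis by (simp only: ennreal_mult'[OF G0, symmetric] eq1 ennreal_1)
  qed
  finally show ?thesis .
qed



lemma meas_S_cong: "measurable (simplex_measure K) N = measurable (PiM {..<K} (\<lambda>_. borel)) N"
  by (rule measurable_cong_sets[OF sets_S refl])

lemma meas_dir_S [measurable]: "dir_density K \<beta> \<in> borel_measurable (simplex_measure K)"
  unfolding meas_S_cong by (rule meas_dir)

lemma meas_comp_S [measurable]: "k < K \<Longrightarrow> (\<lambda>p. p k) \<in> borel_measurable (simplex_measure K)"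
  unfolding meas_S_cong by measurable

lemma sets_Dir: "sets (Dirichlet K \<beta>) = sets (PiM {..<K} (\<lambda>_. borel))"
  by (simp add: Dirichlet_def sets_S)

lemma space_Dir: "space (Dirichlet K \<beta>) = space (PiM {..<K} (\<lambda>_. borel))"
  by (simp add: Dirichlet_def space_S)

lemma finite_S:
  assumes K: "K \<ge> 1"
  shows "finite_measure (simplex_measure K)"
proof
  interpret product_sigma_finite "\<lambda>_::nat. lborel :: real measure" by (rule psf_lborel)
  have "emeasure (simplex_measure K) (space (simplex_measure K)) = (\<integral>\<^sup>+p. 1 \<partial>simplex_measure K)"
    by simp
  also have "\<dots> = (\<integral>\<^sup>+x. 1 * indicator (Cset (K - 1)) x \<partial>PiM {..<K - 1} (\<lambda>_. lborel))"
    by (rule nn_integral_S[OF K]) simp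
  also have "\<dots> \<le> (\<integral>\<^sup>+x. (\<Prod>k\<in>{..<K - 1}. indicator {0..1::real} (x k)) \<partial>PiM {..<K - 1} (\<lambda>_. lborel))"
  proof (rule nn_integral_mono)
    fix x :: "nat \<Rightarrow> real"
    show "1 * indicator (Cset (K - 1)) x \<le> (\<Prod>k\<in>{..<K - 1}. indicator {0..1} (x k) :: ennreal)"
    proof (cases "x \<in> Cset (K - 1)")
      case True
      have "\<forall>k<K - 1. x k \<in> {0..1}"
      proof (intro allI impI)
        fix k assume k: "k < K - 1"
        have "x k \<le> (\<Sum>i<K - 1. x i)"
          by (rule member_le_sum) (use True k in \<open>auto simp: Cset_def\<close>)
        then show "x k \<in> {0..1}" using True k by (auto simp: Cset_def)
      qed
      then show ?thesis using True by (simp add: indicator_def)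
    qed simp
  qed
  also have "\<dots> = (\<Prod>k\<in>{..<K - 1}. (\<integral>\<^sup>+y. indicator {0..1::real} y \<partial>lborel))"
    by (rule product_nn_integral_prod) auto
  also have "\<dots> = 1" by simp
  finally show "emeasure (simplex_measure K) (space (simplex_measure K)) \<noteq> \<infinity>"
    by (auto simp: top_unique)
qed

lemma prob_Dir:
  assumes K: "K \<ge> 1" and \<beta>: "\<forall>k<K. \<beta> k > 0"
  shows "prob_space (Dirichlet K \<beta>)"
proof
  have "emeasure (Dirichlet K \<beta>) (space (Dirichlet K \<beta>))
      = (\<integral>\<^sup>+p. ennreal (dir_density K \<beta> p) * indicator (space (simplex_measure K)) p \<partial>simplex_measure K)"
    unfolding Dirichlet_def by (subst emeasure_density) (auto)
  also have "\<dots> = (\<integral>\<^sup>+p. ennreal (dir_density K \<beta> p) \<partial>simplex_measure K)"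
    by (rule nn_integral_cong) simp
  also have "\<dots> = 1" by (rule dir_total[OF K \<beta>])
  finally show "emeasure (Dirichlet K \<beta>) (space (Dirichlet K \<beta>)) = 1" .
qed

lemma ln_abs_bound:
  fixes x e :: real assumes e: "e > 0"
  shows "\<bar>ln x\<bar> \<le> (x powr e + x powr (- e)) / e"
proof (cases "x = 0")
  case True then show ?thesis by simp
next
  case False
  have ab: "\<bar>y\<bar> \<le> exp y + exp (- y)" for y :: real
  proof -
    have "y \<le> exp y" using exp_ge_add_one_self[of y] by linarith
    moreover have "- y \<le> exp (- y)" using exp_ge_add_one_self[of "- y"] by linarith
    moreover have "0 < exp y" "0 < exp (- y)" by auto
    ultimately show ?thesis by linarith
  qed
  have "e * \<bar>ln x\<bar> = \<bar>e * ln x\<bar>" using e by (simp add: abs_mult)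
  then have "e * \<bar>ln x\<bar> \<le> exp (e * ln x) + exp (- e * ln x)"
    using ab[of "e * ln x"] by simp
  then show ?thesis using False e by (simp add: powr_def field_simps)
qed

definition Gc :: "nat \<Rightarrow> (nat \<Rightarrow> real) \<Rightarrow> real" where
  "Gc K \<beta> = Gamma (\<Sum>k<K. \<beta> k) / (\<Prod>k<K. Gamma (\<beta> k))"

lemma dir_shift:
  fixes \<beta> :: "nat \<Rightarrow> real"
  assumes k: "k < K" and K: "K \<ge> 1" and \<beta>': "\<forall>j<K. (\<beta>(k := \<beta> k + t)) j > 0"
  shows "dir_density K \<beta> p * p k powr t = Gc K \<beta> / Gc K (\<beta>(k := \<beta> k + t)) * dir_density K (\<beta>(k := \<beta> k + t)) p"
proof -
  let ?b = "\<beta>(k := \<beta> k + t)"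
  have G: "Gc K ?b > 0" unfolding Gc_def by (rule G_pos[OF K \<beta>'])
  have P: "(\<Prod>j<K. p j powr (\<beta> j - 1)) * p k powr t = (\<Prod>j<K. p j powr (?b j - 1))"
  proof -
    have "(\<Prod>j<K. p j powr (\<beta> j - 1)) = p k powr (\<beta> k - 1) * (\<Prod>j\<in>{..<K} - {k}. p j powr (\<beta> j - 1))"
      using k by (subst prod.remove[of _ k]) auto
    moreover have "(\<Prod>j<K. p j powr (?b j - 1)) = p k powr (\<beta> k + t - 1) * (\<Prod>j\<in>{..<K} - {k}. p j powr (?b j - 1))"
      using k by (subst prod.remove[of _ k]) auto
    moreover have "(\<Prod>j\<in>{..<K} - {k}. p j powr (?b j - 1)) = (\<Prod>j\<in>{..<K} - {k}. p j powr (\<beta> j - 1))"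
      by (rule prod.cong) auto
    moreover have "p k powr (\<beta> k + t - 1) = p k powr (\<beta> k - 1) * p k powr t"
      by (simp add: powr_add[symmetric] algebra_simps)
    ultimately show ?thesis by (simp add: mult_ac)
  qed
  show ?thesis
    unfolding dir_density_def Gc_def[symmetric] using G P[symmetric]
    by (simp add: field_simps)
qed



lemma integrable_dir_S:
  assumes K: "K \<ge> 1" and \<beta>: "\<forall>k<K. \<beta> k > 0"
  shows "integrable (simplex_measure K) (dir_density K \<beta>)"
  by (rule integrableI_nonneg) (auto simp: dir_total[OF K \<beta>] dir_nonneg[OF K \<beta>])

lemma int_ln:
  assumes K: "K \<ge> 1" and \<beta>: "\<forall>k<K. \<beta> k > 0" and k: "k < K"
  shows "integrable (Dirichlet K \<beta>) (\<lambda>p. ln (p k))"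
proof -
  define e where "e = \<beta> k / 2"
  have e0: "e > 0" using \<beta> k by (simp add: e_def)
  define b1 where "b1 = \<beta>(k := \<beta> k + e)"
  define b2 where "b2 = \<beta>(k := \<beta> k + (- e))"
  have b1: "\<forall>j<K. b1 j > 0" using \<beta> e0 by (auto simp: b1_def)
  have b2: "\<forall>j<K. b2 j > 0" using \<beta> e0 by (auto simp: b2_def e_def)
  define c1 where "c1 = Gc K \<beta> / Gc K b1"
  define c2 where "c2 = Gc K \<beta> / Gc K b2"
  have c1: "c1 > 0" unfolding c1_def Gc_def by (rule divide_pos_pos[OF G_pos[OF K \<beta>] G_pos[OF K b1]])
  have c2: "c2 > 0" unfolding c2_def Gc_def by (rule divide_pos_pos[OF G_pos[OF K \<beta>] G_pos[OF K b2]])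
  have km: "(\<lambda>p. ln (p k)) \<in> borel_measurable (simplex_measure K)" using k by measurable
  have "integrable (simplex_measure K) (\<lambda>p. dir_density K \<beta> p *\<^sub>R ln (p k))"
  proof (rule Bochner_Integration.integrable_bound)
    show "integrable (simplex_measure K) (\<lambda>p. (c1 * dir_density K b1 p + c2 * dir_density K b2 p) / e)"
      using integrable_dir_S[OF K b1] integrable_dir_S[OF K b2] by auto
    show "(\<lambda>p. dir_density K \<beta> p *\<^sub>R ln (p k)) \<in> borel_measurable (simplex_measure K)"
      using km by measurable
    show "AE p in simplex_measure K. norm (dir_density K \<beta> p *\<^sub>R ln (p k)) \<le> norm ((c1 * dir_density K b1 p + c2 * dir_density K b2 p) / e)"
    proof (rule AE_I2)
      fix p
      have d0: "0 \<le> dir_density K \<beta> p" by (rule dir_nonneg[OF K \<beta>])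
      have n1: "0 \<le> dir_density K b1 p" by (rule dir_nonneg[OF K b1])
      have n2: "0 \<le> dir_density K b2 p" by (rule dir_nonneg[OF K b2])
      have s1: "dir_density K \<beta> p * p k powr e = c1 * dir_density K b1 p"
        unfolding c1_def b1_def by (rule dir_shift[OF k K]) (use b1 in \<open>simp add: b1_def\<close>)
      have s2: "dir_density K \<beta> p * p k powr (- e) = c2 * dir_density K b2 p"
        unfolding c2_def b2_def by (rule dir_shift[OF k K]) (use b2 in \<open>simp add: b2_def\<close>)
      have "norm (dir_density K \<beta> p *\<^sub>R ln (p k)) = dir_density K \<beta> p * \<bar>ln (p k)\<bar>"
        using d0 by (simp add: abs_mult)
      also have "\<dots> \<le> dir_density K \<beta> p * ((p k powr e + p k powr (- e)) / e)"
        by (rule mult_left_mono[OF ln_abs_bound[OF e0] d0])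
      also have "\<dots> = (c1 * dir_density K b1 p + c2 * dir_density K b2 p) / e"
        using s1 s2 by (simp add: distrib_left)
      also have "\<dots> = norm ((c1 * dir_density K b1 p + c2 * dir_density K b2 p) / e)"
        using c1 c2 n1 n2 e0 by simp
      finally show "norm (dir_density K \<beta> p *\<^sub>R ln (p k)) \<le> norm ((c1 * dir_density K b1 p + c2 * dir_density K b2 p) / e)" .
    qed
  qed
  then show ?thesis
    unfolding Dirichlet_def using km
    by (subst integrable_density) (auto simp: dir_nonneg[OF K \<beta>])
qed



lemma dir_zero_iff:
  assumes K: "K \<ge> 1" and \<beta>: "\<forall>k<K. \<beta> k > 0"
  shows "dir_density K \<beta> p = 0 \<longleftrightarrow> (\<exists>k<K. p k = 0)"
proof -
  have G: "Gamma (\<Sum>k<K. \<beta> k) / (\<Prod>k<K. Gamma (\<beta> k)) \<noteq> 0" using G_pos[OF K \<beta>] by linarith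
  show ?thesis unfolding dir_density_def using G by (auto simp: prod_zero_iff)
qed

lemma dir_pos_iff:
  assumes K: "K \<ge> 1" and \<beta>: "\<forall>k<K. \<beta> k > 0"
  shows "dir_density K \<beta> p > 0 \<longleftrightarrow> (\<forall>k<K. p k \<noteq> 0)"
  using dir_zero_iff[OF K \<beta>, of p] dir_nonneg[OF K \<beta>, of p] by auto

lemma ln_dir:
  assumes K: "K \<ge> 1" and \<beta>: "\<forall>k<K. \<beta> k > 0" and p: "\<forall>k<K. p k \<noteq> 0"
  shows "ln (dir_density K \<beta> p) = ln (Gc K \<beta>) + (\<Sum>k<K. (\<beta> k - 1) * ln (p k))"
proof -
  have G: "Gc K \<beta> \<noteq> 0" using G_pos[OF K \<beta>] unfolding Gc_def by linarith
  have P: "(\<Prod>k<K. p k powr (\<beta> k - 1)) \<noteq> 0" using p by (auto simp: prod_zero_iff)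
  have "ln (dir_density K \<beta> p) = ln (Gc K \<beta>) + ln (\<Prod>k<K. p k powr (\<beta> k - 1))"
    unfolding dir_density_def Gc_def[symmetric] using G P by (simp add: ln_mult)
  also have "ln (\<Prod>k<K. p k powr (\<beta> k - 1)) = (\<Sum>k<K. ln (p k powr (\<beta> k - 1)))"
    using p by (intro ln_prod) auto
  finally show ?thesis by simp
qed

lemma cat_eq: "y < K \<Longrightarrow> cat_pmf K p y = p y"
  unfolding cat_pmf_def
  by (subst prod.cong[OF refl, of _ _ "\<lambda>k. if k = y then p k else 1"]) auto

lemma AE_Dir_nz:
  assumes K: "K \<ge> 1" and \<beta>: "\<forall>k<K. \<beta> k > 0"
  shows "AE p in Dirichlet K \<beta>. \<forall>k<K. p k \<noteq> 0"
  unfolding Dirichlet_def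
  by (subst AE_density) (auto intro!: AE_I2 simp: dir_pos_iff[OF K \<beta>, symmetric])

lemma KL_Dir:
  assumes K: "K \<ge> 1" and \<beta>: "\<forall>k<K. \<beta> k > 0" and \<alpha>: "\<forall>k<K. \<alpha> k > 0"
  shows "KL (Dirichlet K \<beta>) (Dirichlet K \<alpha>) = (\<integral>p. ln (dir_density K \<beta> p / dir_density K \<alpha> p) \<partial>Dirichlet K \<beta>)"
proof -
  interpret finite_measure "simplex_measure K" by (rule finite_S[OF K])
  have "KL (Dirichlet K \<beta>) (Dirichlet K \<alpha>)
      = (\<integral>p. dir_density K \<beta> p * log (exp 1) (dir_density K \<beta> p / dir_density K \<alpha> p) \<partial>simplex_measure K)"
    unfolding KL_def Dirichlet_def
    by (rule KL_density_density)
       (auto simp: dir_nonneg[OF K \<beta>] dir_nonneg[OF K \<alpha>] dir_zero_iff[OF K \<alpha>] dir_zero_iff[OF K \<beta>])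
  also have "\<dots> = (\<integral>p. ln (dir_density K \<beta> p / dir_density K \<alpha> p) \<partial>Dirichlet K \<beta>)"
    unfolding Dirichlet_def
    by (subst integral_density) (auto simp: dir_nonneg[OF K \<beta>] log_def)
  finally show ?thesis .
qed

lemma int_L:
  assumes K: "K \<ge> 1" and \<beta>: "\<forall>k<K. \<beta> k > 0" and \<alpha>: "\<forall>k<K. \<alpha> k > 0"
  shows "integrable (Dirichlet K \<beta>) (\<lambda>p. ln (dir_density K \<beta> p / dir_density K \<alpha> p))"
proof -
  interpret prob_space "Dirichlet K \<beta>" by (rule prob_Dir[OF K \<beta>])
  have mD: "measurable (Dirichlet K \<beta>) N = measurable (simplex_measure K) N" for N
    by (rule measurable_cong_sets) (auto simp: Dirichlet_def)
  let ?g = "\<lambda>p. ln (Gc K \<beta>) - ln (Gc K \<alpha>) + (\<Sum>k<K. (\<beta> k - \<alpha> k) * ln (p k))"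
  have "integrable (Dirichlet K \<beta>) ?g"
  proof (rule Bochner_Integration.integrable_add)
    show "integrable (Dirichlet K \<beta>) (\<lambda>p. ln (Gc K \<beta>) - ln (Gc K \<alpha>))" by simp
    show "integrable (Dirichlet K \<beta>) (\<lambda>p. \<Sum>k<K. (\<beta> k - \<alpha> k) * ln (p k))"
      by (rule Bochner_Integration.integrable_sum, rule Bochner_Integration.integrable_mult_right, rule int_ln[OF K \<beta>]) auto
  qed
  moreover have "AE p in Dirichlet K \<beta>. ln (dir_density K \<beta> p / dir_density K \<alpha> p) = ?g p"
    using AE_Dir_nz[OF K \<beta>]
  proof (rule AE_mp, intro AE_I2 impI)
    fix p :: "nat \<Rightarrow> real" assume p: "\<forall>k<K. p k \<noteq> 0"
    have "dir_density K \<beta> p \<noteq> 0" "dir_density K \<alpha> p \<noteq> 0"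
      using p dir_zero_iff[OF K \<beta>] dir_zero_iff[OF K \<alpha>] by auto
    then have "ln (dir_density K \<beta> p / dir_density K \<alpha> p) = ln (dir_density K \<beta> p) - ln (dir_density K \<alpha> p)"
      by (simp add: ln_div)
    also have "\<dots> = ?g p"
      unfolding ln_dir[OF K \<beta> p] ln_dir[OF K \<alpha> p]
      by (simp add: sum_subtractf[symmetric] sum.distrib[symmetric] algebra_simps)
    finally show "ln (dir_density K \<beta> p / dir_density K \<alpha> p) = ?g p" .
  qed
  ultimately show ?thesis
    by (subst integrable_cong_AE) (auto simp: mD)
qed



lemma meas_Dir_cong: "measurable (Dirichlet K \<beta>) N = measurable (PiM {..<K} (\<lambda>_. borel)) N"
  by (rule measurable_cong_sets) (auto simp: sets_Dir)

lemma sets_base_cong: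
  "sets (PiM {..<n} (\<lambda>i. Dirichlet K (\<beta> i))) = sets (PiM {..<n} (\<lambda>_. simplex_measure K))"
  by (rule sets_PiM_cong) (auto simp: sets_Dir sets_S)

lemma indicator_PiE_prod:
  assumes "P \<in> extensional I" "finite I"
  shows "(indicator (Pi\<^sub>E I A) P :: ennreal) = (\<Prod>i\<in>I. indicator (A i) (P i))"
proof (cases "\<forall>i\<in>I. P i \<in> A i")
  case True
  then have "P \<in> Pi\<^sub>E I A" using assms by (auto simp: PiE_def)
  then show ?thesis using True by simp
next
  case False
  then obtain j where j: "j \<in> I" "P j \<notin> A j" by auto
  then have "P \<notin> Pi\<^sub>E I A" by auto
  moreover have "(\<Prod>i\<in>I. indicator (A i) (P i) :: ennreal) = 0"
  proof -
    have "indicator (A j) (P j) = (0::ennreal)" using j by simp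
    then show ?thesis using j assms(2) by (metis prod_zero)
  qed
  ultimately show ?thesis by simp
qed

lemma Q_density:
  fixes n :: nat and \<beta> :: "nat \<Rightarrow> nat \<Rightarrow> real"
  assumes K: "K \<ge> 1" and \<beta>: "\<forall>i. \<forall>k<K. \<beta> i k > 0"
  shows "PiM {..<n} (\<lambda>i. Dirichlet K (\<beta> i))
       = density (PiM {..<n} (\<lambda>_. simplex_measure K)) (\<lambda>P. ennreal (\<Prod>i<n. dir_density K (\<beta> i) (P i)))"
proof -
  interpret S: finite_measure "simplex_measure K" by (rule finite_S[OF K])
  interpret PS: product_sigma_finite "\<lambda>_::nat. simplex_measure K"
    by (simp add: product_sigma_finite_def S.sigma_finite_measure_axioms)
  have psD: "product_sigma_finite (\<lambda>i. Dirichlet K (\<beta> i))"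
    unfolding product_sigma_finite_def
    using prob_Dir[OF K] \<beta> by (auto intro: prob_space_imp_sigma_finite)
  let ?base = "PiM {..<n::nat} (\<lambda>_::nat. simplex_measure K)"
  have hm: "(\<lambda>P. ennreal (\<Prod>i<n. dir_density K (\<beta> i) (P i))) \<in> borel_measurable ?base"
    by measurable
  show ?thesis
  proof (rule product_sigma_finite.PiM_eqI[OF psD, symmetric])
    show "finite {..<n}" by simp
    show "sets (density ?base (\<lambda>P. ennreal (\<Prod>i<n. dir_density K (\<beta> i) (P i)))) = sets (PiM {..<n} (\<lambda>i. Dirichlet K (\<beta> i)))"
      by (simp add: sets_base_cong)
  next
    fix A assume A: "\<And>i. i \<in> {..<n} \<Longrightarrow> A i \<in> sets (Dirichlet K (\<beta> i))"
    have AS: "A i \<in> sets (simplex_measure K)" if "i \<in> {..<n}" for i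
      using A[OF that] by (simp add: sets_Dir sets_S)
    have PA: "Pi\<^sub>E {..<n} A \<in> sets ?base"
      by (rule sets_PiM_I_finite) (auto simp: AS)
    have "emeasure (density ?base (\<lambda>P. ennreal (\<Prod>i<n. dir_density K (\<beta> i) (P i)))) (Pi\<^sub>E {..<n} A)
        = (\<integral>\<^sup>+P. ennreal (\<Prod>i<n. dir_density K (\<beta> i) (P i)) * indicator (Pi\<^sub>E {..<n} A) P \<partial>?base)"
      by (rule emeasure_density[OF hm PA])
    also have "\<dots> = (\<integral>\<^sup>+P. (\<Prod>i<n. ennreal (dir_density K (\<beta> i) (P i)) * indicator (A i) (P i)) \<partial>?base)"
    proof (rule nn_integral_cong)
      fix P assume P: "P \<in> space ?base"
      then have "P \<in> extensional {..<n}" by (auto simp: space_PiM PiE_def)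
      then show "ennreal (\<Prod>i<n. dir_density K (\<beta> i) (P i)) * indicator (Pi\<^sub>E {..<n} A) P
          = (\<Prod>i<n. ennreal (dir_density K (\<beta> i) (P i)) * indicator (A i) (P i))"
        using \<beta> by (simp add: indicator_PiE_prod prod.distrib prod_ennreal dir_nonneg[OF K])
    qed
    also have "\<dots> = (\<Prod>i<n. (\<integral>\<^sup>+p. ennreal (dir_density K (\<beta> i) p) * indicator (A i) p \<partial>simplex_measure K))"
      by (rule PS.product_nn_integral_prod)
         (auto intro!: borel_measurable_times_ennreal borel_measurable_indicator AS)
    also have "\<dots> = (\<Prod>i<n. emeasure (Dirichlet K (\<beta> i)) (A i))"
      unfolding Dirichlet_def by (rule prod.cong[OF refl], rule emeasure_density[symmetric]) (auto simp: AS)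
    finally show "emeasure (density ?base (\<lambda>P. ennreal (\<Prod>i<n. dir_density K (\<beta> i) (P i)))) (Pi\<^sub>E {..<n} A)
        = (\<Prod>i\<in>{..<n}. emeasure (Dirichlet K (\<beta> i)) (A i))" .
  qed
qed



definition zc :: "nat \<Rightarrow> (nat \<Rightarrow> real) \<Rightarrow> real \<Rightarrow> nat \<Rightarrow> real" where
  "zc K \<alpha> \<nu> y = Gc K \<alpha> / Gc K (\<alpha>(y := \<alpha> y + \<nu>))"

lemma zc_pos:
  assumes K: "K \<ge> 1" and \<alpha>: "\<forall>k<K. \<alpha> k > 0" and \<nu>: "\<nu> > 0"
  shows "zc K \<alpha> \<nu> y > 0"
proof -
  have "\<forall>k<K. (\<alpha>(y := \<alpha> y + \<nu>)) k > 0" using \<alpha> \<nu> by auto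
  then show ?thesis unfolding zc_def Gc_def by (rule divide_pos_pos[OF G_pos[OF K \<alpha>] G_pos[OF K]])
qed

lemma u_comp:
  assumes K: "K \<ge> 1" and \<alpha>: "\<forall>k<K. \<alpha> k > 0" and \<nu>: "\<nu> > 0" and y: "y < K"
  shows "cat_pmf K p y powr \<nu> * dir_density K \<alpha> p = zc K \<alpha> \<nu> y * dir_density K (\<alpha>(y := \<alpha> y + \<nu>)) p"
proof -
  have "\<forall>k<K. (\<alpha>(y := \<alpha> y + \<nu>)) k > 0" using \<alpha> \<nu> by auto
  then have "dir_density K \<alpha> p * p y powr \<nu> = zc K \<alpha> \<nu> y * dir_density K (\<alpha>(y := \<alpha> y + \<nu>)) p"
    unfolding zc_def by (rule dir_shift[OF y K])
  then show ?thesis by (simp add: cat_eq[OF y] mult.commute)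
qed

lemma Z_val:
  fixes n :: nat and Y :: "nat \<Rightarrow> nat"
  assumes K: "K \<ge> 1" and \<alpha>: "\<forall>k<K. \<alpha> k > 0" and \<nu>: "\<nu> > 0" and Y: "\<forall>i<n. Y i < K"
  shows "(\<integral>\<^sup>+P. ennreal (\<Prod>i<n. cat_pmf K (P i) (Y i) powr \<nu> * dir_density K \<alpha> (P i)) \<partial>PiM {..<n} (\<lambda>_. simplex_measure K))
       = ennreal (\<Prod>i<n. zc K \<alpha> \<nu> (Y i))"
proof -
  interpret S: finite_measure "simplex_measure K" by (rule finite_S[OF K])
  interpret PS: product_sigma_finite "\<lambda>_::nat. simplex_measure K"
    by (simp add: product_sigma_finite_def S.sigma_finite_measure_axioms)
  have nn: "0 \<le> cat_pmf K p y powr \<nu> * dir_density K \<alpha> p" for p y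
    by (simp add: dir_nonneg[OF K \<alpha>])
  have "(\<integral>\<^sup>+P. ennreal (\<Prod>i<n. cat_pmf K (P i) (Y i) powr \<nu> * dir_density K \<alpha> (P i)) \<partial>PiM {..<n} (\<lambda>_. simplex_measure K))
      = (\<integral>\<^sup>+P. (\<Prod>i<n. ennreal (cat_pmf K (P i) (Y i) powr \<nu> * dir_density K \<alpha> (P i))) \<partial>PiM {..<n} (\<lambda>_. simplex_measure K))"
    by (rule nn_integral_cong) (simp add: prod_ennreal nn)
  also have "\<dots> = (\<Prod>i<n. (\<integral>\<^sup>+p. ennreal (cat_pmf K p (Y i) powr \<nu> * dir_density K \<alpha> p) \<partial>simplex_measure K))"
  proof (rule PS.product_nn_integral_prod)
    fix i :: nat assume i: "i \<in> {..<n}"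
    have "(\<lambda>p. cat_pmf K p (Y i) powr \<nu> * dir_density K \<alpha> p) \<in> borel_measurable (simplex_measure K)"
      unfolding cat_pmf_def by measurable
    then show "(\<lambda>p. ennreal (cat_pmf K p (Y i) powr \<nu> * dir_density K \<alpha> p)) \<in> borel_measurable (simplex_measure K)"
      by measurable
  qed simp
  also have "\<dots> = (\<Prod>i<n. ennreal (zc K \<alpha> \<nu> (Y i)))"
  proof (rule prod.cong[OF refl])
    fix i assume i: "i \<in> {..<n}"
    have yi: "Y i < K" using Y i by auto
    have a': "\<forall>k<K. (\<alpha>(Y i := \<alpha> (Y i) + \<nu>)) k > 0" using \<alpha> \<nu> by auto
    have z0: "0 \<le> zc K \<alpha> \<nu> (Y i)" using zc_pos[OF K \<alpha> \<nu>] less_imp_le by blast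
    have "(\<integral>\<^sup>+p. ennreal (cat_pmf K p (Y i) powr \<nu> * dir_density K \<alpha> p) \<partial>simplex_measure K)
        = (\<integral>\<^sup>+p. ennreal (zc K \<alpha> \<nu> (Y i)) * ennreal (dir_density K (\<alpha>(Y i := \<alpha> (Y i) + \<nu>)) p) \<partial>simplex_measure K)"
      by (rule nn_integral_cong) (simp add: u_comp[OF K \<alpha> \<nu> yi] ennreal_mult' z0)
    also have "\<dots> = ennreal (zc K \<alpha> \<nu> (Y i))"
      by (subst nn_integral_cmult) (auto simp: dir_total[OF K a'])
    finally show "(\<integral>\<^sup>+p. ennreal (cat_pmf K p (Y i) powr \<nu> * dir_density K \<alpha> p) \<partial>simplex_measure K) = ennreal (zc K \<alpha> \<nu> (Y i))" .
  qed
  also have "\<dots> = ennreal (\<Prod>i<n. zc K \<alpha> \<nu> (Y i))"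
    by (rule prod_ennreal) (use zc_pos[OF K \<alpha> \<nu>] less_imp_le in blast)
  finally show ?thesis .
qed

lemma TP_density:
  fixes n :: nat and Y :: "nat \<Rightarrow> nat"
  assumes K: "K \<ge> 1" and \<alpha>: "\<forall>k<K. \<alpha> k > 0" and \<nu>: "\<nu> > 0" and Y: "\<forall>i<n. Y i < K"
  shows "tempered_posterior K \<alpha> \<nu> n Y = density (PiM {..<n} (\<lambda>_. simplex_measure K))
     (\<lambda>P. ennreal ((\<Prod>i<n. cat_pmf K (P i) (Y i) powr \<nu> * dir_density K \<alpha> (P i)) / (\<Prod>i<n. zc K \<alpha> \<nu> (Y i))))"
proof -
  have zr: "0 < (\<Prod>i<n. zc K \<alpha> \<nu> (Y i))" by (rule prod_pos) (use zc_pos[OF K \<alpha> \<nu>] in blast)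
  have nn: "0 \<le> (\<Prod>i<n. cat_pmf K (P i) (Y i) powr \<nu> * dir_density K \<alpha> (P i))" for P
    by (rule prod_nonneg) (simp add: dir_nonneg[OF K \<alpha>])
  show ?thesis
    unfolding tempered_posterior_def Let_def Z_val[OF K \<alpha> \<nu> Y]
    by (simp add: divide_ennreal[OF nn zr])
qed



lemma KL_prod:
  fixes n :: nat and Y :: "nat \<Rightarrow> nat" and \<beta> :: "nat \<Rightarrow> nat \<Rightarrow> real"
  assumes K: "K \<ge> 1" and \<alpha>: "\<forall>k<K. \<alpha> k > 0" and \<nu>: "\<nu> > 0" and Y: "\<forall>i<n. Y i < K"
    and \<beta>: "\<forall>i. \<forall>k<K. \<beta> i k > 0"
  shows "KL (PiM {..<n} (\<lambda>i. Dirichlet K (\<beta> i))) (tempered_posterior K \<alpha> \<nu> n Y)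
   = (\<Sum>i<n. \<integral>p. (ln (dir_density K (\<beta> i) p / dir_density K \<alpha> p) - \<nu> * ln (p (Y i))) \<partial>Dirichlet K (\<beta> i))
     + ln (\<Prod>i<n. zc K \<alpha> \<nu> (Y i))"
proof -
  interpret S: finite_measure "simplex_measure K" by (rule finite_S[OF K])
  interpret PS: product_sigma_finite "\<lambda>_::nat. simplex_measure K"
    by (simp add: product_sigma_finite_def S.sigma_finite_measure_axioms)
  interpret B: sigma_finite_measure "PiM {..<n} (\<lambda>_::nat. simplex_measure K)"
    by (rule PS.sigma_finite) simp
  let ?base = "PiM {..<n} (\<lambda>_::nat. simplex_measure K)"
  let ?Q = "PiM {..<n} (\<lambda>i. Dirichlet K (\<beta> i))"
  define h where "h P = (\<Prod>i<n. dir_density K (\<beta> i) (P i))" for P :: "nat \<Rightarrow> nat \<Rightarrow> real"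
  define u where "u P = (\<Prod>i<n. cat_pmf K (P i) (Y i) powr \<nu> * dir_density K \<alpha> (P i))" for P :: "nat \<Rightarrow> nat \<Rightarrow> real"
  define zr where "zr = (\<Prod>i<n. zc K \<alpha> \<nu> (Y i))"
  define F where "F i p = ln (dir_density K (\<beta> i) p / dir_density K \<alpha> p) - \<nu> * ln (p (Y i))" for i p
  have zr: "zr > 0" unfolding zr_def by (rule prod_pos) (use zc_pos[OF K \<alpha> \<nu>] in blast)
  have bi: "\<forall>k<K. \<beta> i k > 0" for i using \<beta> by auto
  have probM: "prob_space (Dirichlet K (\<beta> i))" for i by (rule prob_Dir[OF K bi])
  have Qd: "?Q = density ?base (\<lambda>P. ennreal (h P))"
    unfolding h_def by (rule Q_density[OF K \<beta>])
  have Td: "tempered_posterior K \<alpha> \<nu> n Y = density ?base (\<lambda>P. ennreal (u P / zr))"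
    unfolding u_def zr_def by (rule TP_density[OF K \<alpha> \<nu> Y])
  have hm: "h \<in> borel_measurable ?base" unfolding h_def by measurable
  have um: "(\<lambda>P. u P / zr) \<in> borel_measurable ?base" unfolding u_def cat_pmf_def by measurable
  have h0: "0 \<le> h P" for P unfolding h_def by (rule prod_nonneg) (simp add: dir_nonneg[OF K bi])
  have u0: "0 \<le> u P" for P unfolding u_def by (rule prod_nonneg) (simp add: dir_nonneg[OF K \<alpha>])
  have lm: "(\<lambda>P. ln (h P / (u P / zr))) \<in> borel_measurable ?base" using hm um by measurable
  have ac: "u P / zr = 0 \<longrightarrow> h P = 0" for P
  proof
    assume "u P / zr = 0"
    then have "u P = 0" using zr by simp
    then obtain i where i: "i < n" and "cat_pmf K (P i) (Y i) powr \<nu> * dir_density K \<alpha> (P i) = 0"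
      unfolding u_def by (auto simp: prod_zero_iff)
    then have "\<exists>k<K. P i k = 0"
      using Y i by (auto simp: cat_eq dir_zero_iff[OF K \<alpha>])
    then have "dir_density K (\<beta> i) (P i) = 0" by (simp add: dir_zero_iff[OF K bi])
    then show "h P = 0" unfolding h_def using i by (auto simp: prod_zero_iff)
  qed
  have "KL ?Q (tempered_posterior K \<alpha> \<nu> n Y)
      = (\<integral>P. h P * log (exp 1) (h P / (u P / zr)) \<partial>?base)"
    unfolding KL_def Qd Td
    by (rule B.KL_density_density) (auto simp: hm um h0 u0 zr ac intro!: AE_I2 divide_nonneg_pos)
  also have "\<dots> = (\<integral>P. ln (h P / (u P / zr)) \<partial>?Q)"
    unfolding Qd by (subst integral_density[OF lm hm]) (auto simp: h0 log_def)
  also have "\<dots> = (\<integral>P. (\<Sum>i<n. F i (P i)) + ln zr \<partial>?Q)"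
  proof (rule integral_cong_AE)
    show "(\<lambda>P. ln (h P / (u P / zr))) \<in> borel_measurable ?Q"
      unfolding measurable_cong_sets[OF sets_base_cong refl] by (rule lm)
    have Fm: "(\<lambda>p. F i p) \<in> borel_measurable (simplex_measure K)" if "i < n" for i
    proof -
      have "Y i < K" using Y that by auto
      then show ?thesis unfolding F_def by measurable
    qed
    show "(\<lambda>P. (\<Sum>i<n. F i (P i)) + ln zr) \<in> borel_measurable ?Q"
      unfolding measurable_cong_sets[OF sets_base_cong refl] using Fm by measurable
    have "AE P in ?Q. \<forall>i\<in>{..<n}. \<forall>k<K. P i k \<noteq> 0"
    proof (rule AE_finite_allI)
      fix i assume "i \<in> {..<n}"
      then show "AE P in ?Q. \<forall>k<K. P i k \<noteq> 0"
        by (intro AE_PiM_component[where P="\<lambda>p. \<forall>k<K. p k \<noteq> 0"] probM AE_Dir_nz[OF K bi])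
    qed simp
    then show "AE P in ?Q. ln (h P / (u P / zr)) = (\<Sum>i<n. F i (P i)) + ln zr"
    proof (rule AE_mp, intro AE_I2 impI)
      fix P :: "nat \<Rightarrow> nat \<Rightarrow> real" assume nz: "\<forall>i\<in>{..<n}. \<forall>k<K. P i k \<noteq> 0"
      have dB: "dir_density K (\<beta> i) (P i) \<noteq> 0" if "i < n" for i
        using nz that by (auto simp: dir_zero_iff[OF K bi])
      have dA: "dir_density K \<alpha> (P i) \<noteq> 0" if "i < n" for i
        using nz that by (auto simp: dir_zero_iff[OF K \<alpha>])
      have cY: "cat_pmf K (P i) (Y i) = P i (Y i)" "P i (Y i) \<noteq> 0" if "i < n" for i
        using nz that Y by (auto simp: cat_eq)
      have hn: "h P \<noteq> 0" unfolding h_def using dB by (auto simp: prod_zero_iff)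
      have un: "u P \<noteq> 0" unfolding u_def using dA cY by (auto simp: prod_zero_iff)
      have lh: "ln (h P) = (\<Sum>i<n. ln (dir_density K (\<beta> i) (P i)))"
        unfolding h_def by (rule ln_prod) (use dB in auto)
      have lu: "ln (u P) = (\<Sum>i<n. \<nu> * ln (P i (Y i)) + ln (dir_density K \<alpha> (P i)))"
      proof -
        have "ln (u P) = (\<Sum>i<n. ln (cat_pmf K (P i) (Y i) powr \<nu> * dir_density K \<alpha> (P i)))"
          unfolding u_def by (rule ln_prod) (use dA cY in auto)
        also have "\<dots> = (\<Sum>i<n. \<nu> * ln (P i (Y i)) + ln (dir_density K \<alpha> (P i)))"
          by (rule sum.cong[OF refl]) (use dA cY in \<open>auto simp: ln_mult\<close>)
        finally show ?thesis .
      qed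
      have lF: "(\<Sum>i<n. F i (P i)) = (\<Sum>i<n. ln (dir_density K (\<beta> i) (P i)) - ln (dir_density K \<alpha> (P i)) - \<nu> * ln (P i (Y i)))"
        unfolding F_def by (rule sum.cong[OF refl]) (use dA dB in \<open>auto simp: ln_div\<close>)
      have "ln (h P / (u P / zr)) = ln (h P) - ln (u P) + ln zr"
        using hn un zr by (simp add: ln_div ln_mult)
      also have "\<dots> = (\<Sum>i<n. F i (P i)) + ln zr"
        unfolding lh lu lF by (simp add: sum_subtractf sum.distrib)
      finally show "ln (h P / (u P / zr)) = (\<Sum>i<n. F i (P i)) + ln zr" .
    qed
  qed
  also have "\<dots> = (\<Sum>i<n. \<integral>p. F i p \<partial>Dirichlet K (\<beta> i)) + ln zr"
  proof -
    interpret Qp: prob_space ?Q by (rule prob_space_PiM) (rule probM)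
    have comp: "distr ?Q (Dirichlet K (\<beta> i)) (\<lambda>P. P i) = Dirichlet K (\<beta> i)" if "i < n" for i
      by (rule distr_PiM_component) (use probM that in auto)
    have Fm: "F i \<in> borel_measurable (Dirichlet K (\<beta> i))" if "i < n" for i
    proof -
      have "Y i \<in> {..<K}" using Y that by auto
      then show ?thesis unfolding F_def meas_Dir_cong by measurable
    qed
    have Fi: "integrable (Dirichlet K (\<beta> i)) (F i)" if "i < n" for i
    proof -
      have "Y i < K" using Y that by auto
      then show ?thesis unfolding F_def
        by (intro Bochner_Integration.integrable_diff Bochner_Integration.integrable_mult_right int_L[OF K bi \<alpha>] int_ln[OF K bi])
    qed
    have cm: "(\<lambda>P. P i) \<in> measurable ?Q (Dirichlet K (\<beta> i))" if "i < n" for i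
    proof -
      have "i \<in> {..<n}" using that by simp
      then show ?thesis by measurable
    qed
    have eqi: "(\<integral>P. F i (P i) \<partial>?Q) = (\<integral>p. F i p \<partial>Dirichlet K (\<beta> i))" if "i < n" for i
      using integral_distr[OF cm[OF that] Fm[OF that]] comp[OF that] by simp
    have inti: "integrable ?Q (\<lambda>P. F i (P i))" if "i < n" for i
      using integrable_distr_eq[OF cm[OF that] Fm[OF that]] comp[OF that] Fi[OF that] by simp
    have "(\<integral>P. (\<Sum>i<n. F i (P i)) + ln zr \<partial>?Q) = (\<integral>P. (\<Sum>i<n. F i (P i)) \<partial>?Q) + (\<integral>P. ln zr \<partial>?Q)"
      by (rule Bochner_Integration.integral_add) (auto intro!: Bochner_Integration.integrable_sum inti)
    also have "(\<integral>P. (\<Sum>i<n. F i (P i)) \<partial>?Q) = (\<Sum>i<n. \<integral>P. F i (P i) \<partial>?Q)"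
      by (rule Bochner_Integration.integral_sum) (auto intro!: inti)
    also have "\<dots> = (\<Sum>i<n. \<integral>p. F i p \<partial>Dirichlet K (\<beta> i))"
      by (rule sum.cong[OF refl]) (auto intro!: eqi)
    finally show ?thesis using Qp.prob_space by simp
  qed
  finally show ?thesis unfolding F_def zr_def .
qed



lemma EDL_rel:
  fixes n :: nat and Y :: "nat \<Rightarrow> nat" and \<beta> :: "nat \<Rightarrow> nat \<Rightarrow> real"
  assumes K: "K \<ge> 1" and \<alpha>: "\<forall>k<K. \<alpha> k > 0" and \<nu>: "\<nu> > 0" and Y: "\<forall>i<n. Y i < K"
    and \<beta>: "\<forall>i. \<forall>k<K. \<beta> i k > 0"
  shows "KL (PiM {..<n} (\<lambda>i. Dirichlet K (\<beta> i))) (tempered_posterior K \<alpha> \<nu> n Y)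
   = \<nu> * ((\<Sum>i<n. - (\<integral>p. ln (cat_pmf K p (Y i)) \<partial>Dirichlet K (\<beta> i)))
        + (1 / \<nu>) * (\<Sum>i<n. KL (Dirichlet K (\<beta> i)) (Dirichlet K \<alpha>)))
     + ln (\<Prod>i<n. zc K \<alpha> \<nu> (Y i))"
proof -
  have bi: "\<forall>k<K. \<beta> i k > 0" for i using \<beta> by auto
  define L where "L i = (\<integral>p. ln (dir_density K (\<beta> i) p / dir_density K \<alpha> p) \<partial>Dirichlet K (\<beta> i))" for i
  define C where "C i = (\<integral>p. ln (p (Y i)) \<partial>Dirichlet K (\<beta> i))" for i
  have e1: "(\<integral>p. (ln (dir_density K (\<beta> i) p / dir_density K \<alpha> p) - \<nu> * ln (p (Y i))) \<partial>Dirichlet K (\<beta> i))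
      = L i - \<nu> * C i" if "i < n" for i
  proof -
    have yi: "Y i < K" using Y that by auto
    show ?thesis unfolding L_def C_def
      by (subst Bochner_Integration.integral_diff)
         (auto intro!: int_L[OF K bi \<alpha>] int_ln[OF K bi yi] Bochner_Integration.integrable_mult_right)
  qed
  have e2: "(\<integral>p. ln (cat_pmf K p (Y i)) \<partial>Dirichlet K (\<beta> i)) = C i" if "i < n" for i
  proof -
    have yi: "Y i < K" using Y that by auto
    show ?thesis unfolding C_def by (rule Bochner_Integration.integral_cong) (auto simp: cat_eq[OF yi])
  qed
  have e3: "KL (Dirichlet K (\<beta> i)) (Dirichlet K \<alpha>) = L i" for i
    unfolding L_def by (rule KL_Dir[OF K bi \<alpha>])
  have "KL (PiM {..<n} (\<lambda>i. Dirichlet K (\<beta> i))) (tempered_posterior K \<alpha> \<nu> n Y)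
     = (\<Sum>i<n. L i - \<nu> * C i) + ln (\<Prod>i<n. zc K \<alpha> \<nu> (Y i))"
    unfolding KL_prod[OF K \<alpha> \<nu> Y \<beta>] using e1 by simp
  also have "\<dots> = \<nu> * ((\<Sum>i<n. - C i) + (1 / \<nu>) * (\<Sum>i<n. L i)) + ln (\<Prod>i<n. zc K \<alpha> \<nu> (Y i))"
    using \<nu> by (simp add: sum_subtractf sum_distrib_left[symmetric] sum_negf algebra_simps)
  finally show ?thesis using e2 e3 by simp
qed

theorem theorem2p10:
  fixes K n :: nat and \<alpha> :: "nat \<Rightarrow> real" and \<nu> :: real
    and Y :: "nat \<Rightarrow> nat" and X :: "nat \<Rightarrow> real ^ 'd"
    and NN :: "'phi \<Rightarrow> real ^ 'd \<Rightarrow> nat \<Rightarrow> real" and \<Phi> :: "'phi set" and \<phi>_hat :: 'phi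
  assumes "K \<ge> 2"
    and "\<forall>k<K. \<alpha> k > 0"
    and "\<nu> > 0"
    and "\<forall>i<n. Y i < K"
    and "\<forall>\<phi>\<in>\<Phi>. \<forall>x. \<forall>k<K. NN \<phi> x k \<ge> 0"
    and "\<phi>_hat \<in> \<Phi>"
  shows "is_arg_min (\<lambda>\<phi>. KL (mean_field K \<alpha> NN n X \<phi>) (tempered_posterior K \<alpha> \<nu> n Y))
            (\<lambda>\<phi>. \<phi> \<in> \<Phi>) \<phi>_hat
         \<longleftrightarrow> is_arg_min (edl_loss K \<alpha> NN (1 / \<nu>) n Y X) (\<lambda>\<phi>. \<phi> \<in> \<Phi>) \<phi>_hat"
proof -
  have K: "K \<ge> 1" using assms(1) by simp
  define c where "c = ln (\<Prod>i<n. zc K \<alpha> \<nu> (Y i))"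
  have key: "KL (mean_field K \<alpha> NN n X \<phi>) (tempered_posterior K \<alpha> \<nu> n Y)
      = \<nu> * edl_loss K \<alpha> NN (1 / \<nu>) n Y X \<phi> + c" if "\<phi> \<in> \<Phi>" for \<phi>
  proof -
    have \<beta>: "\<forall>i. \<forall>k<K. (\<lambda>i k. \<alpha> k + NN \<phi> (X i) k) i k > 0"
      using assms(2,5) that by (auto intro: add_pos_nonneg)
    show ?thesis
      unfolding mean_field_def edl_loss_def c_def
      using EDL_rel[OF K assms(2,3,4) \<beta>] by simp
  qed
  show ?thesis
    unfolding is_arg_min_def using key assms(3,6) by auto
qed


end
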